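(* Let $n\ge2$ and $\sigma\ge2$ be integers, and let $s$ be a random string of length $n$ whose characters are drawn independently and uniformly from an alphabet of size $\sigma$. Set $p=(\sigma-1)/\sigma$, let $r(s)$ be the number of maximal runs of $s$, and let $k$ be the number of tokens of $\mathcal{F}(s)$. Then $r(s)-1\sim\mathrm{Bin}(n-1,p)$ and \[\mathbb{E}[k]=1+\frac{1+(n-1)p}{2}+\frac{1+\bigl((2-\sigma)/\sigma\bigr)^{n-1}}{4}=\frac{n(\sigma-1)}{2\sigma}+O(1).\]
   Context: A maximal run of a string is a maximal block of consecutive equal symbols. Let $\texttt{@},\texttt{\$}$ be two distinct symbols not in the alphabet. For a string $s$ of length $n$ let $\hat s=\texttt{@}\,s\,\texttt{\$}$ (positions $1,\dots,n+2$); $\hat s[i..j)$ is the substring at positions $i,\dots,j-1$. The leading (trailing) run of a non-empty string is its longest prefix (suffix) consisting of one repeated symbol. The Flashback decomposition $\mathcal{F}(s)$ is the sequence of tokens (pairs $(\sigma,p)$) produced as follows, starting from active span $[lo,hi)=[1,n+3)$: if $lo\ge hi$, stop. Let $\ell$ be the length of the leading run of $\hat s[lo..hi)$. If $\ell=hi-lo$, append $(\hat s[lo..hi),0)$ and stop. Otherwise let $\hat s[r..hi)$ be the trailing run of $\hat s[lo..hi)$ and $\sigma=\hat s[lo..lo+\ell)\cdot\hat s[r..hi)$; if $lo+\ell\ge r$, append $(\sigma,0)$ and stop; otherwise append $(\sigma,\ell)$ and repeat with active span $[lo+\ell,r)$. *)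

theory Defs
  imports "HOL-Probability.Probability"
begin

(* Alphabet of size alpha: the characters 0..alpha-1 (type nat).
   Extended alphabet for \<hat>s: the sentinels @ and $ plus ordinary characters. *)
datatype sym = At | Dollar | Ch nat

definition hat :: "nat list \<Rightarrow> sym list" where
  "hat s = [At] @ map Ch s @ [Dollar]"

definition lead_run :: "'a list \<Rightarrow> nat" where
  "lead_run t = length (takeWhile (\<lambda>x. x = hd t) t)"

definition trail_run :: "'a list \<Rightarrow> nat" where
  "trail_run t = length (takeWhile (\<lambda>x. x = last t) (rev t))"

lemma lead_run_pos: "t \<noteq> [] \<Longrightarrow> 0 < lead_run t"
  by (cases t) (auto simp: lead_run_def)

(* Flashback decomposition applied to the active substring t = \<hat>s[lo..hi).
   With l the leading-run length and m the trailing-run length (so r = hi - m),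
   the next active span [lo+l, r) is  take (length t - m - l) (drop l t). *)
function flashback_aux :: "sym list \<Rightarrow> (sym list \<times> nat) list" where
  "flashback_aux t =
    (if t = [] then []
     else let l = lead_run t in
       if l = length t then [(t, 0)]
       else let m = trail_run t;
                sg = take l t @ drop (length t - m) t in
         if l \<ge> length t - m then [(sg, 0)]
         else (sg, l) # flashback_aux (take (length t - m - l) (drop l t)))"
  by pat_completeness auto
termination
  by (relation "Wellfounded.measure length") (auto simp: lead_run_pos)

(* \<F>(s): starting from the full span [1, n+3) of \<hat>s *)
definition flashback :: "nat list \<Rightarrow> (sym list \<times> nat) list" where
  "flashback s = flashback_aux (hat s)"

definition runs :: "'a list \<Rightarrow> nat" where
  "runs s = length (remdups_adj s)"

definition strings :: "nat \<Rightarrow> nat \<Rightarrow> nat list set" where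
  "strings n alpha = {xs. length xs = n \<and> set xs \<subseteq> {..<alpha}}"

(* uniformly random string: i.i.d. uniform characters *)
definition rand_string :: "nat \<Rightarrow> nat \<Rightarrow> nat list pmf" where
  "rand_string n alpha = pmf_of_set (strings n alpha)"

definition exp_tokens :: "nat \<Rightarrow> nat \<Rightarrow> real" where
  "exp_tokens n alpha =
     measure_pmf.expectation (rand_string n alpha) (\<lambda>s. real (length (flashback s)))"

end

theory Submission
  imports Defs
begin


lemma lead_run_eq:
  assumes "a > 0" "u = [] \<or> hd u \<noteq> x"
  shows "lead_run (replicate a x @ u) = a"
  using assms unfolding lead_run_def
  by (cases u) (auto simp: takeWhile_append)

lemma trail_run_eq:
  assumes "b > 0" "w = [] \<or> last w \<noteq> y"
  shows "trail_run (w @ replicate b y) = b"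
proof -
  have "rev (w @ replicate b y) = replicate b y @ rev w" by simp
  moreover have "last (w @ replicate b y) = y" using assms by simp
  ultimately show ?thesis using assms unfolding trail_run_def
    by (cases "rev w") (auto simp: takeWhile_append last_rev[symmetric] hd_rev)
qed

lemma runs_rep_left:
  assumes "a > 0" "u = [] \<or> hd u \<noteq> x"
  shows "runs (replicate a x @ u) = Suc (runs u)"
proof -
  have "remdups_adj (replicate a x @ u) = remdups_adj (replicate a x) @ remdups_adj u"
    using assms by (intro remdups_adj_append') auto
  thus ?thesis using assms by (simp add: runs_def remdups_adj_replicate)
qed

lemma runs_rep_right:
  assumes "b > 0" "w = [] \<or> last w \<noteq> y"
  shows "runs (w @ replicate b y) = Suc (runs w)"
proof -
  have "remdups_adj (w @ replicate b y) = remdups_adj w @ remdups_adj (replicate b y)"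
    using assms by (intro remdups_adj_append') auto
  thus ?thesis using assms by (simp add: runs_def remdups_adj_replicate)
qed

lemma decomp_left:
  assumes "t \<noteq> []"
  obtains a x u where "t = replicate a x @ u" "a > 0" "u = [] \<or> hd u \<noteq> x"
proof -
  let ?x = "hd t"
  have tw: "takeWhile (\<lambda>y. y = ?x) t = replicate (length (takeWhile (\<lambda>y. y = ?x) t)) ?x"
    by (metis (mono_tags) replicate_length_same set_takeWhileD)
  have "length (takeWhile (\<lambda>y. y = ?x) t) > 0" using assms by (cases t) auto
  moreover have "dropWhile (\<lambda>y. y = ?x) t = [] \<or> hd (dropWhile (\<lambda>y. y = ?x) t) \<noteq> ?x"
    using hd_dropWhile by blast
  ultimately show ?thesis using that[of "length (takeWhile (\<lambda>y. y = ?x) t)" ?x "dropWhile (\<lambda>y. y = ?x) t"]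
    tw takeWhile_dropWhile_id by metis
qed

lemma decomp_right:
  assumes "t \<noteq> []"
  obtains b y w where "t = w @ replicate b y" "b > 0" "w = [] \<or> last w \<noteq> y"
proof -
  obtain a x u where h: "rev t = replicate a x @ u" "a > 0" "u = [] \<or> hd u \<noteq> x"
    using decomp_left[of "rev t"] assms by auto
  hence "t = rev u @ replicate a x" by (metis rev_append rev_replicate rev_rev_ident)
  moreover have "rev u = [] \<or> last (rev u) \<noteq> x" using h by (auto simp: last_rev)
  ultimately show ?thesis using that h by blast
qed

lemma flashback_step:
  assumes "a > 0" "b > 0" "w \<noteq> []" "hd w \<noteq> x" "last w \<noteq> y"
  shows "flashback_aux (replicate a x @ w @ replicate b y) =
     (replicate a x @ replicate b y, a) # flashback_aux w"
proof -
  let ?t = "replicate a x @ w @ replicate b y"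
  have l: "lead_run ?t = a" using assms by (intro lead_run_eq) (cases w, auto)
  have m: "trail_run ?t = b" using trail_run_eq[of b "replicate a x @ w" y] assms by simp
  show ?thesis
    apply (subst flashback_aux.simps)
    using assms l m by (simp add: Let_def)
qed

lemma flashback_len:
  "t \<noteq> [] \<Longrightarrow> length (flashback_aux t) = (runs t + 1) div 2"
proof (induction "length t" arbitrary: t rule: less_induct)
  case less
  obtain a x u where h: "t = replicate a x @ u" "a > 0" "u = [] \<or> hd u \<noteq> x"
    using decomp_left less.prems by blast
  show ?case
  proof (cases "u = []")
    case True
    have "lead_run t = length t" using h True lead_run_eq[of a "[]" x] by simp
    moreover have "runs t = 1" using h True runs_rep_left[of a "[]" x] by (simp add: runs_def)
    ultimately show ?thesis using less.prems by (subst flashback_aux.simps) simp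
  next
    case False
    then obtain b y w where g: "u = w @ replicate b y" "b > 0" "w = [] \<or> last w \<noteq> y"
      using decomp_right by blast
    have hu: "hd u \<noteq> x" using h False by auto
    show ?thesis
    proof (cases "w = []")
      case True
      have yx: "y \<noteq> x" using hu g True by simp
      have l: "lead_run t = a" using h lead_run_eq[of a u x] by simp
      have m: "trail_run t = b" using trail_run_eq[of b "replicate a x" y] g h True yx by simp
      have r: "runs t = 2" using runs_rep_left[OF h(2,3)] runs_rep_right[of b "[]" y] g True h
        by (simp add: runs_def)
      show ?thesis using l m r h g True yx
        by (subst flashback_aux.simps) (simp add: Let_def)
    next
      case False
      have hw: "hd w \<noteq> x" using hu g False by simp
      have lw: "last w \<noteq> y" using g False by simp
      have t: "t = replicate a x @ w @ replicate b y" using h g by simp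
      have r: "runs t = Suc (Suc (runs w))"
        using runs_rep_left[OF h(2,3)] runs_rep_right[OF g(2,3)] h g by simp
      have "length w < length t" using t h g by simp
      hence "length (flashback_aux w) = (runs w + 1) div 2" using less False by blast
      thus ?thesis using flashback_step[OF h(2) g(2) False hw lw] t r by simp
    qed
  qed
qed

lemma flashback_length:
  assumes "s \<noteq> []"
  shows "length (flashback s) = 1 + (runs s + 1) div 2"
proof -
  have "hat s = replicate 1 At @ map Ch s @ replicate 1 Dollar" by (simp add: hat_def)
  hence "flashback s = ([At, Dollar], 1) # flashback_aux (map Ch s)"
    unfolding flashback_def using assms flashback_step[of 1 1 "map Ch s" At Dollar]
    by (simp add: hd_map last_map del: flashback_aux.simps)
  moreover have "runs (map Ch s) = runs s"
    by (simp add: runs_def remdups_adj_map_injective inj_def)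
  ultimately show ?thesis using assms flashback_len[of "map Ch s"] by simp
qed



lemma strings_finite: "finite (strings n a)"
proof -
  have "strings n a = {xs. set xs \<subseteq> {..<a} \<and> length xs = n}" by (auto simp: strings_def)
  thus ?thesis using finite_lists_length_eq[of "{..<a}" n] by simp
qed

lemma strings_nonempty: "a > 0 \<Longrightarrow> strings n a \<noteq> {}"
  by (auto simp: strings_def intro!: exI[of _ "replicate n 0"])

lemma strings_Suc: "strings (Suc n) a = (\<lambda>(s,c). s @ [c]) ` (strings n a \<times> {..<a})"
proof (rule set_eqI, rule iffI)
  fix xs assume "xs \<in> strings (Suc n) a"
  then obtain ys c where "xs = ys @ [c]" "length ys = n" "set ys \<subseteq> {..<a}" "c < a"
    by (cases xs rule: rev_cases) (auto simp: strings_def)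
  thus "xs \<in> (\<lambda>(s,c). s @ [c]) ` (strings n a \<times> {..<a})"
    by (auto simp: strings_def image_iff intro!: bexI[of _ "(ys, c)"])
qed (auto simp: strings_def)

lemma pmf_of_set_times:
  assumes "finite A" "A \<noteq> {}" "finite B" "B \<noteq> {}"
  shows "pmf_of_set (A \<times> B) = pair_pmf (pmf_of_set A) (pmf_of_set B)"
proof (rule pmf_eqI)
  fix z :: "'a \<times> 'b"
  obtain x y where z: "z = (x, y)" by (cases z)
  show "pmf (pmf_of_set (A \<times> B)) z = pmf (pair_pmf (pmf_of_set A) (pmf_of_set B)) z"
    using assms by (simp add: z pmf_pair card_cartesian_product indicator_def)
qed

lemma rand_Suc:
  assumes "a > 0"
  shows "rand_string (Suc n) a =
    bind_pmf (rand_string n a) (\<lambda>s. map_pmf (\<lambda>c. s @ [c]) (pmf_of_set {..<a}))"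
proof -
  have inj: "inj_on (\<lambda>(s,c). s @ [c]) (strings n a \<times> {..<a})"
    by (auto simp: inj_on_def)
  have "rand_string (Suc n) a = map_pmf (\<lambda>(s,c). s @ [c]) (pmf_of_set (strings n a \<times> {..<a}))"
    unfolding rand_string_def strings_Suc
    using assms strings_finite strings_nonempty
    by (subst map_pmf_of_set_inj[OF inj]) auto
  also have "\<dots> = map_pmf (\<lambda>(s,c). s @ [c]) (pair_pmf (rand_string n a) (pmf_of_set {..<a}))"
    unfolding rand_string_def using assms strings_finite strings_nonempty
    by (subst pmf_of_set_times) auto
  also have "\<dots> = bind_pmf (rand_string n a) (\<lambda>s. map_pmf (\<lambda>c. s @ [c]) (pmf_of_set {..<a}))"
    by (simp add: pair_pmf_def map_bind_pmf map_pmf_def bind_assoc_pmf bind_return_pmf)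
  finally show ?thesis .
qed

lemma set_rand: "a > 0 \<Longrightarrow> set_pmf (rand_string n a) = strings n a"
  unfolding rand_string_def using strings_finite strings_nonempty by simp

lemma bern:
  assumes "x < a"
  shows "map_pmf (\<lambda>c. c \<noteq> x) (pmf_of_set {..<a}) = bernoulli_pmf ((real a - 1) / real a)"
proof (rule pmf_eqI)
  fix b :: bool
  have a: "a > 0" using assms by simp
  have c1: "card ({..<a} \<inter> {c. c \<noteq> x}) = a - 1"
  proof -
    have "{..<a} \<inter> {c. c \<noteq> x} = {..<a} - {x}" by auto
    thus ?thesis using assms by simp
  qed
  have c2: "{..<a} \<inter> {c. c = x} = {x}" using assms by auto
  have p0: "0 \<le> (real a - 1) / real a" "(real a - 1) / real a \<le> 1" using a by auto
  show "pmf (map_pmf (\<lambda>c. c \<noteq> x) (pmf_of_set {..<a})) b = pmf (bernoulli_pmf ((real a - 1) / real a)) b"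
  proof (cases b)
    case True
    have "pmf (map_pmf (\<lambda>c. c \<noteq> x) (pmf_of_set {..<a})) b = real (a - 1) / real a"
      using a True c1 measure_pmf_of_set[of "{..<a}" "{c. c \<noteq> x}"] by (simp add: pmf_map vimage_def lessThan_empty_iff)
    thus ?thesis using True p0 a by (simp add: of_nat_diff)
  next
    case False
    have "pmf (map_pmf (\<lambda>c. c \<noteq> x) (pmf_of_set {..<a})) b = 1 / real a"
      using a False c2 measure_pmf_of_set[of "{..<a}" "{c. c = x}"] by (simp add: pmf_map vimage_def lessThan_empty_iff)
    thus ?thesis using False p0 a by (simp add: field_simps)
  qed
qed

lemma runs_snoc: "s \<noteq> [] \<Longrightarrow> runs (s @ [c]) = runs s + (if c = last s then 0 else 1)"
  by (simp add: runs_def remdups_adj_append'')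

lemma runs_pos: "s \<noteq> [] \<Longrightarrow> runs s \<ge> 1"
  by (simp add: runs_def)

lemma runs_dist:
  assumes "a \<ge> 2" "n \<ge> 1"
  shows "map_pmf (\<lambda>s. runs s - 1) (rand_string n a) = binomial_pmf (n - 1) ((real a - 1) / real a)"
  using assms(2)
proof (induction n rule: dec_induct)
  case base
  have "map_pmf (\<lambda>s. runs s - 1) (rand_string 1 a) = map_pmf (\<lambda>_. 0) (rand_string 1 a)"
  proof (rule map_pmf_cong[OF refl])
    fix s assume "s \<in> set_pmf (rand_string 1 a)"
    hence "length s = 1" using set_rand[of a 1] assms by (auto simp: strings_def)
    then obtain c where "s = [c]" by (cases s) auto
    thus "runs s - 1 = 0" by (simp add: runs_def)
  qed
  moreover have "((real a - 1) / real a) \<in> {0..1}" using assms by auto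
  ultimately show ?case by (simp add: binomial_pmf_0)
next
  case (step n)
  let ?p = "(real a - 1) / real a"
  have a: "a > 0" using assms by simp
  have p: "?p \<in> {0..1}" using a by auto
  have "map_pmf (\<lambda>s. runs s - 1) (rand_string (Suc n) a) =
     bind_pmf (rand_string n a) (\<lambda>s. map_pmf (\<lambda>c. runs (s @ [c]) - 1) (pmf_of_set {..<a}))"
    by (simp add: rand_Suc[OF a] map_bind_pmf map_pmf_comp)
  also have "\<dots> = bind_pmf (rand_string n a)
     (\<lambda>s. map_pmf (\<lambda>b. (if b then 1 else 0) + (runs s - 1)) (bernoulli_pmf ?p))"
  proof (rule bind_pmf_cong[OF refl])
    fix s assume "s \<in> set_pmf (rand_string n a)"
    hence s: "length s = n" "set s \<subseteq> {..<a}" using set_rand[OF a] by (auto simp: strings_def)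
    hence ne: "s \<noteq> []" using step by auto
    hence "last s < a" using s by (meson last_in_set lessThan_iff subsetD)
    hence "bernoulli_pmf ?p = map_pmf (\<lambda>c. c \<noteq> last s) (pmf_of_set {..<a})" using bern by metis
    hence "map_pmf (\<lambda>b. (if b then 1 else 0) + (runs s - 1)) (bernoulli_pmf ?p) =
       map_pmf (\<lambda>c. (if c \<noteq> last s then 1 else 0) + (runs s - 1)) (pmf_of_set {..<a})"
      by (simp add: map_pmf_comp)
    also have "\<dots> = map_pmf (\<lambda>c. runs (s @ [c]) - 1) (pmf_of_set {..<a})"
      using runs_snoc[OF ne] runs_pos[OF ne] by (intro map_pmf_cong) auto
    finally show "map_pmf (\<lambda>c. runs (s @ [c]) - 1) (pmf_of_set {..<a}) =
       map_pmf (\<lambda>b. (if b then 1 else 0) + (runs s - 1)) (bernoulli_pmf ?p)" by simp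
  qed
  also have "\<dots> = bind_pmf (map_pmf (\<lambda>s. runs s - 1) (rand_string n a))
     (\<lambda>k. map_pmf (\<lambda>b. (if b then 1 else 0) + k) (bernoulli_pmf ?p))"
    by (simp add: bind_map_pmf)
  also have "\<dots> = bind_pmf (binomial_pmf (n - 1) ?p)
     (\<lambda>k. map_pmf (\<lambda>b. (if b then 1 else 0) + k) (bernoulli_pmf ?p))"
    using step by simp
  also have "\<dots> = binomial_pmf (Suc (n - 1)) ?p"
    unfolding binomial_pmf_Suc[OF p] map_pmf_def
    by (subst bind_commute_pmf) simp
  finally show ?case using step by simp
qed



lemma sum0: "(\<Sum>k\<le>m. real (m choose k) * p ^ k * (1 - p) ^ (m - k)) = 1"
  using binomial_ring[of p "1 - p" m] by simp

lemma sumneg: "(\<Sum>k\<le>m. real (m choose k) * p ^ k * (1 - p) ^ (m - k) * (-1) ^ k) = (1 - 2 * p) ^ m"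
proof -
  have "(1 - 2 * p) ^ m = ((-p) + (1 - p)) ^ m" by simp
  also have "\<dots> = (\<Sum>k\<le>m. real (m choose k) * (-p) ^ k * (1 - p) ^ (m - k))"
    by (rule binomial_ring)
  also have "\<dots> = (\<Sum>k\<le>m. real (m choose k) * p ^ k * (1 - p) ^ (m - k) * (-1) ^ k)"
    by (rule sum.cong[OF refl]) (simp only: power_minus[of p] mult_ac)
  finally show ?thesis by (rule sym)
qed

lemma sum1: "(\<Sum>k\<le>m. real (m choose k) * p ^ k * (1 - p) ^ (m - k) * real k) = real m * p"
proof (cases m)
  case 0 thus ?thesis by simp
next
  case (Suc m')
  have "(\<Sum>k\<le>m. real (m choose k) * p ^ k * (1 - p) ^ (m - k) * real k) =
     (\<Sum>k\<le>m'. real (Suc m' choose Suc k) * p ^ Suc k * (1 - p) ^ (m' - k) * real (Suc k))"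
    unfolding Suc by (subst sum.atMost_Suc_shift) simp
  also have "\<dots> = (\<Sum>k\<le>m'. real (Suc m') * p * (real (m' choose k) * p ^ k * (1 - p) ^ (m' - k)))"
  proof (rule sum.cong[OF refl])
    fix k
    have e: "real (Suc k) * real (Suc m' choose Suc k) = real (Suc m') * real (m' choose k)"
      using binomial_absorption[of k "Suc m'"] by (metis diff_Suc_1 of_nat_mult)
    have "real (Suc m' choose Suc k) * p ^ Suc k * (1 - p) ^ (m' - k) * real (Suc k) =
       (real (Suc k) * real (Suc m' choose Suc k)) * p * (p ^ k * (1 - p) ^ (m' - k))"
      by (simp only: power_Suc mult_ac)
    also have "\<dots> = (real (Suc m') * real (m' choose k)) * p * (p ^ k * (1 - p) ^ (m' - k))"
      by (simp only: e)
    also have "\<dots> = real (Suc m') * p * (real (m' choose k) * p ^ k * (1 - p) ^ (m' - k))"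
      by (simp only: mult_ac)
    finally show "real (Suc m' choose Suc k) * p ^ Suc k * (1 - p) ^ (m' - k) * real (Suc k) =
       real (Suc m') * p * (real (m' choose k) * p ^ k * (1 - p) ^ (m' - k))" .
  qed
  also have "\<dots> = real (Suc m') * p" by (simp add: sum_distrib_left[symmetric] sum0)
  finally show ?thesis using Suc by simp
qed

lemma div2_real: "real (2 + k div 2) = 7/4 + real k / 2 + (-1) ^ k / 4"
proof (cases "even k")
  case True thus ?thesis by (auto elim!: evenE)
next
  case False
  then obtain j where "k = 2 * j + 1" using oddE by blast
  thus ?thesis by (simp add: field_simps)
qed

lemma exp_formula:
  assumes "a \<ge> 2" "n \<ge> 1"
  shows "exp_tokens n a = 7/4 + real (n - 1) * ((real a - 1) / real a) / 2
     + (1 - 2 * ((real a - 1) / real a)) ^ (n - 1) / 4"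
proof -
  let ?p = "(real a - 1) / real a"
  let ?X = "\<lambda>s. runs s - 1"
  let ?g = "\<lambda>k. real (2 + k div 2)"
  have a: "a > 0" using assms by simp
  have p: "?p \<in> {0..1}" using a by auto
  have "exp_tokens n a = measure_pmf.expectation (rand_string n a) (\<lambda>s. ?g (?X s))"
    unfolding exp_tokens_def
  proof (rule integral_cong_AE)
    show "AE s in measure_pmf (rand_string n a). real (length (flashback s)) = ?g (?X s)"
    proof (rule AE_pmfI)
      fix s assume "s \<in> set_pmf (rand_string n a)"
      hence "length s = n" using set_rand[OF a] by (auto simp: strings_def)
      hence ne: "s \<noteq> []" using assms by auto
      show "real (length (flashback s)) = ?g (?X s)"
      proof -
        have r: "runs s + 1 = ?X s + 2" using runs_pos[OF ne] by simp
        have "length (flashback s) = 2 + ?X s div 2"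
          unfolding flashback_length[OF ne] r by simp
        thus ?thesis by simp
      qed
    qed
  qed auto
  also have "\<dots> = measure_pmf.expectation (map_pmf ?X (rand_string n a)) ?g" by simp
  also have "\<dots> = measure_pmf.expectation (binomial_pmf (n - 1) ?p) ?g"
    using runs_dist[OF assms] by simp
  also have "\<dots> = (\<Sum>k\<le>n-1. real ((n-1) choose k) * ?p ^ k * (1 - ?p) ^ (n - 1 - k) * ?g k)"
    by (simp only: expectation_binomial_pmf'[OF p] real_scaleR_def)
  also have "\<dots> = (\<Sum>k\<le>n-1. 7/4 * (real ((n-1) choose k) * ?p ^ k * (1 - ?p) ^ (n - 1 - k))
      + 1/2 * (real ((n-1) choose k) * ?p ^ k * (1 - ?p) ^ (n - 1 - k) * real k)
      + 1/4 * (real ((n-1) choose k) * ?p ^ k * (1 - ?p) ^ (n - 1 - k) * (-1) ^ k))"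
  proof (rule sum.cong[OF refl])
    fix k
    have lin: "\<And>w x y::real. w * (7/4 + x/2 + y/4) = 7/4*w + 1/2*(w*x) + 1/4*(w*y)"
      by (simp add: algebra_simps)
    show "real ((n-1) choose k) * ?p ^ k * (1 - ?p) ^ (n - 1 - k) * ?g k =
      7/4 * (real ((n-1) choose k) * ?p ^ k * (1 - ?p) ^ (n - 1 - k))
      + 1/2 * (real ((n-1) choose k) * ?p ^ k * (1 - ?p) ^ (n - 1 - k) * real k)
      + 1/4 * (real ((n-1) choose k) * ?p ^ k * (1 - ?p) ^ (n - 1 - k) * (-1) ^ k)"
      unfolding div2_real by (rule lin)
  qed
  also have "\<dots> = 7/4 + real (n - 1) * ?p / 2 + (1 - 2 * ?p) ^ (n - 1) / 4"
    by (simp only: sum.distrib sum_distrib_left[symmetric] sum0 sum1 sumneg) simp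
  finally show ?thesis .
qed


theorem theorem5p2:
  shows "(\<forall>n alpha. n \<ge> 2 \<and> alpha \<ge> 2 \<longrightarrow>
            (let p = (real alpha - 1) / real alpha in
              map_pmf (\<lambda>s. runs s - 1) (rand_string n alpha) = binomial_pmf (n - 1) p
              \<and> exp_tokens n alpha =
                  1 + (1 + real (n - 1) * p) / 2
                    + (1 + ((2 - real alpha) / real alpha) ^ (n - 1)) / 4))
       \<and> (\<exists>C. \<forall>n alpha. n \<ge> 2 \<and> alpha \<ge> 2 \<longrightarrow>
            \<bar>exp_tokens n alpha - real n * (real alpha - 1) / (2 * real alpha)\<bar> \<le> C)"
proof (intro conjI allI impI)
  fix n alpha :: nat
  assume h: "n \<ge> 2 \<and> alpha \<ge> 2"
  hence a: "alpha \<ge> 2" "n \<ge> 1" by auto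
  define P where "P = (real alpha - 1) / real alpha"
  have q: "1 - 2 * P = (2 - real alpha) / real alpha"
    using a by (simp add: field_simps P_def)
  have e: "exp_tokens n alpha = 7/4 + real (n - 1) * P / 2 + ((2 - real alpha) / real alpha) ^ (n - 1) / 4"
    using exp_formula[OF a] unfolding P_def[symmetric] q .
  have ar: "\<And>x y :: real. 7/4 + x / 2 + y / 4 = 1 + (1 + x) / 2 + (1 + y) / 4" by (simp add: field_simps)
  show "let p = (real alpha - 1) / real alpha in
              map_pmf (\<lambda>s. runs s - 1) (rand_string n alpha) = binomial_pmf (n - 1) p
              \<and> exp_tokens n alpha =
                  1 + (1 + real (n - 1) * p) / 2
                    + (1 + ((2 - real alpha) / real alpha) ^ (n - 1)) / 4"
    unfolding Let_def P_def[symmetric]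
    using runs_dist[OF a] e ar unfolding P_def[symmetric] by simp
next
  show "\<exists>C. \<forall>n alpha. n \<ge> 2 \<and> alpha \<ge> 2 \<longrightarrow>
            \<bar>exp_tokens n alpha - real n * (real alpha - 1) / (2 * real alpha)\<bar> \<le> C"
  proof (intro exI[of _ 3] allI impI)
    fix n alpha :: nat
    assume h: "n \<ge> 2 \<and> alpha \<ge> 2"
    hence a: "alpha \<ge> 2" "n \<ge> 1" by auto
    define p where "p = (real alpha - 1) / real alpha"
    define q where "q = 1 - 2 * p"
    have p01: "0 \<le> p" "p \<le> 1" using a by (auto simp: p_def)
    have "\<bar>q\<bar> \<le> 1" using p01 by (simp add: q_def)
    hence qm: "\<bar>q ^ (n - 1)\<bar> \<le> 1" by (simp add: power_abs power_le_one)
    have e: "exp_tokens n alpha = 7/4 + real (n - 1) * p / 2 + q ^ (n - 1) / 4"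
      using exp_formula[OF a] by (simp add: p_def q_def)
    have r: "real n * (real alpha - 1) / (2 * real alpha) = real n * p / 2"
      by (simp add: p_def)
    have "real (n - 1) = real n - 1" using a by (simp add: of_nat_diff)
    hence e2: "exp_tokens n alpha = 7/4 + (real n - 1) * p / 2 + q ^ (n - 1) / 4" using e by simp
    have "exp_tokens n alpha - real n * (real alpha - 1) / (2 * real alpha)
       = 7/4 - p / 2 + q ^ (n - 1) / 4" unfolding r e2 by (simp add: field_simps)
    thus "\<bar>exp_tokens n alpha - real n * (real alpha - 1) / (2 * real alpha)\<bar> \<le> 3"
      using qm p01 by (simp add: abs_le_iff) linarith?
  qed
qed

end
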